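(* Let $a,u\in\mathbb Z$ with $a\ge2$, $|u|\le a$, and let $n$ be a sufficiently large positive integer. Then all $a$ roots of the polynomial $p_u(\tau)=e^{i\pi u}n(\tau-1)^a-\tau^{a-1}$ are given by the (convergent) asymptotic expansions $$\tau_k(u)=1+\sum_{m=1}^\infty\frac{(2-m/a)_{m-1}}{m!}\cdot\frac{e^{\frac{m(2\pi k-\pi u)i}{a}}}{n^{m/a}},\qquad k=0,1,\ldots,a-1.$$
   Context: $(\lambda)_0=1$, $(\lambda)_m=\lambda(\lambda+1)\cdots(\lambda+m-1)$ is the Pochhammer symbol. *)

theory Defs
  imports "HOL-Analysis.Analysis"
begin

definition p_poly :: "int \<Rightarrow> int \<Rightarrow> nat \<Rightarrow> complex \<Rightarrow> complex" where
  "p_poly a u n \<tau> = exp (\<i> * of_real (pi * real_of_int u)) * of_nat n * (\<tau> - 1) ^ nat a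
                     - \<tau> ^ (nat a - 1)"

definition exp_term :: "int \<Rightarrow> int \<Rightarrow> nat \<Rightarrow> nat \<Rightarrow> nat \<Rightarrow> complex" where
  "exp_term a u n k m =
     of_real (pochhammer (2 - real m / real_of_int a) (m - 1) / fact m)
     * exp (\<i> * of_real (real m * (2 * pi * real k - pi * real_of_int u) / real_of_int a))
     / of_real (real n powr (real m / real_of_int a))"

end

theory Submission
  imports Defs
begin

no_notation vec_nth (infixl \<open>$\<close> 90)
notation fps_nth (infixl \<open>$\<close> 75)



lemma compose_mult_nth:
  fixes A F G :: "'a::idom fps"
  assumes F0: "F $ 0 = 0"
  shows "((A oo F) * G) $ N = (\<Sum>i=0..N. A $ i * (F ^ i * G) $ N)"
proof -
  have z: "(F ^ i) $ j = 0" if "j < i" for i j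
    using startsby_zero_power_prefix[OF F0] that by blast
  have c: "(A oo F) $ j = (\<Sum>i=0..N. A $ i * (F ^ i) $ j)" if "j \<le> N" for j
    unfolding fps_compose_nth
    by (rule sum.mono_neutral_left) (use that z in auto)
  have "((A oo F) * G) $ N = (\<Sum>j=0..N. (\<Sum>i=0..N. A $ i * (F ^ i) $ j) * G $ (N - j))"
    unfolding fps_mult_nth by (rule sum.cong) (auto simp: c)
  also have "\<dots> = (\<Sum>j=0..N. \<Sum>i=0..N. A $ i * ((F ^ i) $ j * G $ (N - j)))"
    by (simp add: sum_distrib_right mult.assoc)
  also have "\<dots> = (\<Sum>i=0..N. \<Sum>j=0..N. A $ i * ((F ^ i) $ j * G $ (N - j)))"
    by (rule sum.swap)
  also have "\<dots> = (\<Sum>i=0..N. A $ i * (F ^ i * G) $ N)"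
    by (simp add: fps_mult_nth sum_distrib_left)
  finally show ?thesis .
qed

lemma lagrange_key:
  fixes \<phi> :: "complex fps"
  assumes p0: "\<phi> $ 0 = 1"
  shows "((fps_X * inverse \<phi>) ^ i * fps_deriv (fps_X * inverse \<phi>) * \<phi> ^ (i + 1 + p)) $ (i + p)
         = (if p = 0 then 1 else 0)"
proof -
  define U where "U = inverse \<phi>"
  have U\<phi>: "U * \<phi> = 1" unfolding U_def by (rule inverse_mult_eq_1) (simp add: p0)
  have Ui: "U ^ i * \<phi> ^ i = 1" by (metis U\<phi> power_mult_distrib power_one)
  define H where "H = \<phi> ^ p + fps_X * (fps_deriv U * \<phi> ^ (p + 1))"
  have "(fps_X * U) ^ i * fps_deriv (fps_X * U) * \<phi> ^ (i + 1 + p)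
        = fps_X ^ i * ((U ^ i * \<phi> ^ i) * ((U * \<phi>) * \<phi> ^ p + fps_X * (fps_deriv U * \<phi> ^ (p+1))))"
    by (simp add: power_mult_distrib power_add algebra_simps)
  also have "\<dots> = fps_X ^ i * H" unfolding H_def Ui U\<phi> by simp
  finally have e: "(fps_X * U) ^ i * fps_deriv (fps_X * U) * \<phi> ^ (i + 1 + p) = fps_X ^ i * H" .
  have "H $ p = (if p = 0 then 1 else 0)"
  proof (cases p)
    case 0 then show ?thesis by (simp add: H_def)
  next
    case (Suc q)
    have dU: "fps_deriv U = - fps_deriv \<phi> * U\<^sup>2"
      unfolding U_def by (rule fps_inverse_deriv) (simp add: p0)
    have "fps_deriv U * \<phi> ^ (p + 1) = - fps_deriv \<phi> * \<phi> ^ q * (U * \<phi>)\<^sup>2"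
      by (simp add: dU Suc power2_eq_square algebra_simps)
    also have "\<dots> = - fps_deriv \<phi> * \<phi> ^ q" by (simp add: U\<phi>)
    finally have 1: "fps_deriv U * \<phi> ^ (p + 1) = - fps_deriv \<phi> * \<phi> ^ q" .
    have 2: "fps_deriv (\<phi> ^ p) = fps_const (of_nat p) * (fps_deriv \<phi> * \<phi> ^ q)"
      using fps_deriv_power[of \<phi> p] by (simp add: Suc mult.assoc del: power_Suc)
    have "(fps_deriv (\<phi> ^ p)) $ q = of_nat p * (fps_deriv \<phi> * \<phi> ^ q) $ q"
      unfolding 2 by simp
    moreover have "(1::complex) + of_nat q \<noteq> 0"
      by (metis of_nat_Suc of_nat_eq_0_iff nat.simps(3))
    ultimately have "(fps_deriv \<phi> * \<phi> ^ q) $ q = (\<phi> ^ p) $ p"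
      by (simp add: Suc del: power_Suc)
    then show ?thesis using 1 by (simp add: H_def Suc del: power_Suc)
  qed
  then show ?thesis using e unfolding U_def[symmetric]
    by (simp add: fps_X_power_mult_nth)
qed

lemma lagrange:
  fixes \<phi> :: "complex fps"
  assumes p0: "\<phi> $ 0 = 1" and n: "n > 0"
  shows "of_nat n * fps_inv (fps_X * inverse \<phi>) $ n = (\<phi> ^ n) $ (n - 1)"
proof -
  define F where "F = fps_X * inverse \<phi>"
  define W where "W = fps_inv F"
  have F0: "F $ 0 = 0" by (simp add: F_def)
  have F1: "F $ 1 \<noteq> 0" by (simp add: F_def p0)
  have "W oo F = fps_X" unfolding W_def by (rule fps_inv[OF F0 F1])
  then have "fps_deriv (W oo F) = 1" by simp
  then have d: "(fps_deriv W oo F) * fps_deriv F = 1"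
    by (simp add: fps_compose_deriv[OF F0])
  have "\<phi> ^ n = ((fps_deriv W oo F) * (fps_deriv F * \<phi> ^ n))"
    by (metis d mult.assoc mult_1)
  then have "(\<phi> ^ n) $ (n - 1) = ((fps_deriv W oo F) * (fps_deriv F * \<phi> ^ n)) $ (n - 1)"
    by (rule arg_cong)
  also have "\<dots> = (\<Sum>i=0..n-1. fps_deriv W $ i * (F ^ i * (fps_deriv F * \<phi> ^ n)) $ (n - 1))"
    by (rule compose_mult_nth[OF F0])
  also have "\<dots> = (\<Sum>i=0..n-1. if i = n - 1 then fps_deriv W $ i else 0)"
  proof (rule sum.cong[OF refl])
    fix i assume "i \<in> {0..n-1}"
    define p where "p = n - 1 - i"
    have p: "n = i + 1 + p" using n \<open>i \<in> {0..n-1}\<close> unfolding p_def by auto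
    have "(F ^ i * (fps_deriv F * \<phi> ^ n)) $ (n - 1) = (if p = 0 then 1 else 0)"
      using lagrange_key[OF p0, of i p] unfolding F_def p by (simp add: mult.assoc)
    then show "fps_deriv W $ i * (F ^ i * (fps_deriv F * \<phi> ^ n)) $ (n - 1) = (if i = n - 1 then fps_deriv W $ i else 0)"
      using p by (auto simp del: fps_deriv_nth)
  qed
  also have "\<dots> = fps_deriv W $ (n - 1)" by (simp del: fps_deriv_nth)
  also have "\<dots> = of_nat n * W $ n" using n by simp
  finally show ?thesis unfolding W_def F_def by simp
qed




definition Wser :: "nat \<Rightarrow> complex fps" where
  "Wser A = fps_inv (fps_X * inverse (fps_binomial (of_nat (A - 1) / of_nat A)))"

lemma Wser_0: "Wser A $ 0 = 0"
  by (simp add: Wser_def fps_inv_def)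

lemma Wser_nth:
  assumes "m > 0"
  shows "Wser A $ m = ((of_nat m * (of_nat (A - 1) / of_nat A)) gchoose (m - 1)) / of_nat m"
proof -
  have "of_nat m * Wser A $ m = (fps_binomial (of_nat (A - 1) / of_nat A) ^ m) $ (m - 1)"
    unfolding Wser_def by (rule lagrange[OF _ assms]) simp
  also have "\<dots> = (of_nat m * (of_nat (A - 1) / of_nat A)) gchoose (m - 1)"
    by (simp add: fps_binomial_power)
  finally show ?thesis using assms by (simp add: field_simps)
qed

lemma Wser_eq:
  assumes A: "A > 0"
  shows "Wser A ^ A = fps_X ^ A * (1 + Wser A) ^ (A - 1)"
proof -
  define \<phi> where "\<phi> = fps_binomial (of_nat (A - 1) / of_nat A :: complex)"
  define W where "W = Wser A"
  define F where "F = fps_X * inverse \<phi>"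
  have p0: "\<phi> $ 0 = 1" by (simp add: \<phi>_def)
  have F0: "F $ 0 = 0" by (simp add: F_def)
  have F1: "F $ 1 \<noteq> 0" by (simp add: F_def p0)
  have W0: "W $ 0 = 0" by (simp add: W_def Wser_0)
  have WF: "W = fps_inv F" by (simp add: W_def Wser_def F_def \<phi>_def)
  have "F oo W = fps_X" unfolding WF by (rule fps_inv_right[OF F0 F1])
  then have "W * inverse (\<phi> oo W) = fps_X"
    unfolding F_def fps_compose_mult_distrib[OF W0] fps_X_fps_compose_startby0[OF W0]
    using fps_inverse_compose[OF W0, of \<phi>] p0 by simp
  moreover have "inverse (\<phi> oo W) * (\<phi> oo W) = 1"
    by (rule inverse_mult_eq_1) (simp add: p0)
  ultimately have W: "W = fps_X * (\<phi> oo W)"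
    by (metis mult.assoc mult_1_right)
  have "(\<phi> oo W) ^ A = \<phi> ^ A oo W" by (rule fps_compose_power[OF W0])
  also have "\<phi> ^ A = fps_binomial (of_nat (A - 1))"
    unfolding \<phi>_def fps_binomial_power using A by simp
  also have "\<dots> = (1 + fps_X) ^ (A - 1)" by (rule fps_binomial_of_nat)
  also have "\<dots> oo W = ((1 + fps_X) oo W) ^ (A - 1)" by (rule fps_compose_power[OF W0, symmetric])
  also have "(1 + fps_X) oo W = 1 + W" by (simp add: fps_compose_add_distrib W0)
  finally have "(\<phi> oo W) ^ A = (1 + W) ^ (A - 1)" .
  then have "W ^ A = fps_X ^ A * (1 + W) ^ (A - 1)"
    by (metis W power_mult_distrib)
  then show ?thesis by (simp add: W_def)
qed




definition cc :: "nat \<Rightarrow> nat \<Rightarrow> real" where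
  "cc A m = pochhammer (2 - real m / real A) (m - 1) / fact m"

lemma Wser_cc:
  assumes A: "A > 0" and m: "m > 0"
  shows "Wser A $ m = of_real (cc A m)"
proof -
  have e: "of_nat m * (of_nat (A - 1) / of_nat A) - of_nat (m - 1) + 1
        = (of_real (2 - real m / real A) :: complex)"
    using A m by (simp add: of_nat_diff field_simps)
  have f: "fact m = (of_nat m * fact (m - 1) :: complex)"
    using m by (metis fact_nonzero fact_num_eq_if of_nat_fact of_nat_mult zero_less_iff_neq_zero)
  show ?thesis
    unfolding Wser_nth[OF m] gbinomial_pochhammer' e pochhammer_of_real cc_def
    using m by (simp add: field_simps f)
qed

lemma pochhammer_abs_le:
  fixes x y :: real
  assumes "\<bar>x\<bar> \<le> y"
  shows "\<bar>pochhammer x k\<bar> \<le> pochhammer y k"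
proof (induction k)
  case 0 then show ?case by simp
next
  case (Suc k)
  have y0: "0 \<le> y" using assms by linarith
  have "\<bar>pochhammer x (Suc k)\<bar> = \<bar>pochhammer x k\<bar> * \<bar>x + of_nat k\<bar>"
    by (simp add: pochhammer_Suc abs_mult)
  also have "\<dots> \<le> pochhammer y k * (y + of_nat k)"
    using Suc assms by (intro mult_mono) (auto simp: pochhammer_nonneg y0)
  finally show ?case by (simp add: pochhammer_Suc)
qed

lemma cc_bound:
  assumes A: "A > 0" and m: "m > 0"
  shows "\<bar>cc A m\<bar> \<le> 4 ^ m"
proof -
  have x: "\<bar>2 - real m / real A\<bar> \<le> real (m + 2)"
  proof -
    have "m \<le> m * A" using A by simp
    then have "real m \<le> real m * real A" by (metis of_nat_le_iff of_nat_mult)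
    then have "real m / real A \<le> real m" using A by (simp add: divide_le_eq)
    moreover have "0 \<le> real m / real A" by simp
    ultimately show ?thesis by (simp only: of_nat_add of_nat_numeral)
  qed
  have "\<bar>pochhammer (2 - real m / real A) (m - 1)\<bar> \<le> pochhammer (real (m + 2)) (m - 1)"
    by (rule pochhammer_abs_le[OF x])
  also have "pochhammer (real (m + 2)) (m - 1) = real ((2 * m) choose (m - 1)) * fact (m - 1)"
  proof -
    have "real ((2 * m) choose (m - 1)) = pochhammer (real (2 * m) - real (m - 1) + 1) (m - 1) / fact (m - 1)"
      by (simp add: binomial_gbinomial gbinomial_pochhammer')
    moreover have "real (2 * m) - real (m - 1) + 1 = real (m + 2)" using m by (simp add: of_nat_diff)
    ultimately show ?thesis by simp
  qed
  also have "\<dots> \<le> 4 ^ m * fact (m - 1)"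
  proof -
    have "(2 * m) choose (m - 1) \<le> 2 ^ (2 * m)" by (rule binomial_le_pow2)
    then have "real ((2 * m) choose (m - 1)) \<le> 2 ^ (2 * m)"
      by (metis of_nat_le_iff of_nat_numeral of_nat_power)
    also have "(2::real) ^ (2 * m) = 4 ^ m" by (simp add: power_mult)
    finally have "real ((2 * m) choose (m - 1)) \<le> 4 ^ m" .
    then show ?thesis by (simp add: mult_right_mono)
  qed
  also have "\<dots> \<le> 4 ^ m * fact m" by (simp add: fact_mono)
  finally show ?thesis unfolding cc_def by (simp add: abs_div field_simps)
qed




lemma Wser_bound:
  assumes A: "A > 0"
  shows "norm (Wser A $ m) \<le> 4 ^ m"
proof (cases "m = 0")
  case True then show ?thesis by (simp add: Wser_0)
next
  case False
  then show ?thesis using cc_bound[OF A, of m] by (simp add: Wser_cc[OF A])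
qed

lemma Wser_term_bound:
  assumes A: "A > 0"
  shows "norm (Wser A $ m * z ^ m) \<le> (4 * norm z) ^ m"
  using Wser_bound[OF A, of m]
  by (simp add: norm_mult norm_power power_mult_distrib mult_right_mono)

lemma Wser_summable:
  assumes A: "A > 0" and z: "norm z < 1/4"
  shows "summable (\<lambda>m. Wser A $ m * z ^ m)"
proof (rule summable_comparison_test)
  show "\<exists>N. \<forall>n\<ge>N. norm (Wser A $ n * z ^ n) \<le> (4 * norm z) ^ n"
    using Wser_term_bound[OF A] by blast
  show "summable (\<lambda>n. (4 * norm z) ^ n)" by (rule summable_geometric) (use z in simp)
qed

lemma Wser_radius:
  assumes A: "A > 0"
  shows "fps_conv_radius (Wser A) \<ge> ereal (1/4)"
  unfolding fps_conv_radius_def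
proof (rule conv_radius_geI_ex')
  fix r :: real assume "0 < r" "ereal r < ereal (1/4)"
  then have "norm (of_real r :: complex) < 1/4" by simp
  then show "summable (\<lambda>n. Wser A $ n * of_real r ^ n)" by (rule Wser_summable[OF A])
qed

lemma Wser_R:
  assumes A: "A > 0" and z: "norm z < 1/4"
  shows "ereal (norm z) < fps_conv_radius (Wser A)"
proof -
  have "ereal (norm z) < ereal (1/4)" using z by simp
  then show ?thesis using Wser_radius[OF A] by (rule less_le_trans)
qed

lemma Wser_eval_eq:
  assumes A: "A > 0" and z: "norm z < 1/4"
  shows "eval_fps (Wser A) z ^ A = z ^ A * (1 + eval_fps (Wser A) z) ^ (A - 1)"
proof -
  have R: "norm z < fps_conv_radius (Wser A)"
    by (rule Wser_R[OF A z])
  have R1: "norm z < fps_conv_radius (1 + Wser A)"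
    using fps_conv_radius_add[of 1 "Wser A"] R by (auto intro: less_le_trans)
  have R2: "norm z < fps_conv_radius ((1 + Wser A) ^ (A - 1))"
    using fps_conv_radius_power[of "1 + Wser A" "A - 1"] R1 by (auto intro: less_le_trans)
  have "eval_fps (Wser A) z ^ A = eval_fps (Wser A ^ A) z"
    by (rule eval_fps_power[OF R, symmetric])
  also have "\<dots> = eval_fps (fps_X ^ A * (1 + Wser A) ^ (A - 1)) z"
    by (simp add: Wser_eq[OF A])
  also have "\<dots> = z ^ A * eval_fps ((1 + Wser A) ^ (A - 1)) z"
    by (subst eval_fps_mult) (use R2 in auto)
  also have "eval_fps ((1 + Wser A) ^ (A - 1)) z = (1 + eval_fps (Wser A) z) ^ (A - 1)"
    by (simp add: eval_fps_power[OF R1] eval_fps_add[OF _ R])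
  finally show ?thesis .
qed

lemma Wser_sums:
  assumes A: "A > 0" and z: "norm z < 1/4"
  shows "(\<lambda>m. Wser A $ Suc m * z ^ Suc m) sums eval_fps (Wser A) z"
proof -
  have R: "norm z < fps_conv_radius (Wser A)"
    by (rule Wser_R[OF A z])
  show ?thesis using sums_Suc_iff[of "\<lambda>n. Wser A $ n * z ^ n" "eval_fps (Wser A) z"] sums_eval_fps[OF R]
    by (simp add: Wser_0)
qed

lemma Wser_1: "A > 0 \<Longrightarrow> Wser A $ Suc 0 = 1"
  using Wser_cc[of A 1] by (simp add: cc_def)

lemma Wser_close:
  assumes A: "A > 0" and z: "norm z \<le> 1/8"
  shows "norm (eval_fps (Wser A) z - z) \<le> 32 * norm z ^ 2"
proof -
  have z4: "norm z < 1/4" using z by simp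
  have R: "norm z < fps_conv_radius (Wser A)"
    by (rule Wser_R[OF A z4])
  have "(\<lambda>i. Wser A $ (i + 2) * z ^ (i + 2)) sums (eval_fps (Wser A) z - (\<Sum>i<2. Wser A $ i * z ^ i))"
    by (rule sums_split_initial_segment[OF sums_eval_fps[OF R]])
  moreover have "(\<Sum>i<2. Wser A $ i * z ^ i) = z"
    by (simp add: numeral_2_eq_2 Wser_0 Wser_1[OF A])
  ultimately have s: "(\<lambda>i. Wser A $ (i + 2) * z ^ (i + 2)) sums (eval_fps (Wser A) z - z)" by simp
  define q where "q = 4 * norm z"
  have q: "0 \<le> q" "q \<le> 1/2" using z by (auto simp: q_def)
  have g: "(\<lambda>i. q ^ 2 * q ^ i) sums (q ^ 2 * (1 / (1 - q)))"
    by (rule sums_mult, rule geometric_sums) (use q in auto)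
  have "norm (eval_fps (Wser A) z - z) \<le> q ^ 2 * (1 / (1 - q))"
  proof -
    have "norm (suminf (\<lambda>i. Wser A $ (i + 2) * z ^ (i + 2))) \<le> suminf (\<lambda>i. q ^ 2 * q ^ i)"
    proof (rule norm_suminf_le)
      fix i
      show "norm (Wser A $ (i + 2) * z ^ (i + 2)) \<le> q ^ 2 * q ^ i"
        using Wser_term_bound[OF A, of "i + 2" z] unfolding q_def by (simp add: power_add power2_eq_square algebra_simps)
      show "summable (\<lambda>i. q ^ 2 * q ^ i)" using g by (rule sums_summable)
    qed
    then show ?thesis using sums_unique[OF s] sums_unique[OF g] by simp
  qed
  also have "\<dots> \<le> q ^ 2 * 2"
    using q by (intro mult_left_mono) (auto simp: field_simps)
  also have "\<dots> = 32 * norm z ^ 2" by (simp add: q_def power2_eq_square)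
  finally show ?thesis .
qed




lemma poly_factor_roots:
  fixes p :: "complex poly"
  assumes "finite S" "card S = degree p" "\<forall>z\<in>S. poly p z = 0"
  shows "p = smult (lead_coeff p) (\<Prod>z\<in>S. [:-z, 1:])"
  using assms
proof (induction S arbitrary: p rule: finite_induct)
  case empty
  then have "degree p = 0" by simp
  then show ?case using degree_0_id[of p] by (metis \<open>degree p = 0\<close> prod.empty smult_one)
next
  case (insert x S)
  have "poly p x = 0" using insert by simp
  then obtain q where q: "p = [:-x, 1:] * q" by (metis poly_eq_0_iff_dvd dvdE)
  have dp: "degree p = card S + 1" using insert by simp
  then have "p \<noteq> 0" by auto
  then have q0: "q \<noteq> 0" using q by auto
  have "degree p = degree [:-x, 1:] + degree q" unfolding q by (rule degree_mult_eq) (use q0 in simp_all)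
  then have "degree p = 1 + degree q" by simp
  then have dq: "card S = degree q" using dp by simp
  have rq: "\<forall>z\<in>S. poly q z = 0"
  proof
    fix z assume "z \<in> S"
    then have "poly p z = 0" "z \<noteq> x" using insert by auto
    then show "poly q z = 0" using q by simp
  qed
  have lc: "lead_coeff p = lead_coeff q" unfolding q lead_coeff_mult by simp
  have "q = smult (lead_coeff q) (\<Prod>z\<in>S. [:-z, 1:])" by (rule insert.IH[OF dq rq])
  then have "p = [:-x, 1:] * smult (lead_coeff q) (\<Prod>z\<in>S. [:-z, 1:])" using q by simp
  also have "\<dots> = smult (lead_coeff p) (\<Prod>z\<in>insert x S. [:-z, 1:])"
    using insert by (simp add: lc mult_smult_right)
  finally show ?case .
qed




theorem lemma7:
  fixes a u :: int
  assumes "a \<ge> 2" and "\<bar>u\<bar> \<le> a"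
  shows "\<exists>N::nat. \<forall>n::nat. n \<ge> N \<and> n \<ge> 1 \<longrightarrow>
           (\<forall>k < nat a. summable (\<lambda>m. exp_term a u n k (Suc m))) \<and>
           (\<forall>\<tau>. p_poly a u n \<tau> =
                  exp (\<i> * of_real (pi * real_of_int u)) * of_nat n
                  * (\<Prod>k<nat a. \<tau> - (1 + (\<Sum>m. exp_term a u n k (Suc m)))))"
proof -
  define A where "A = nat a"
  have A2: "A \<ge> 2" using assms(1) by (simp add: A_def)
  then have A0: "A > 0" by simp
  have aA: "real_of_int a = real A" using assms(1) by (simp add: A_def)
  define c0 where "c0 = exp (\<i> * of_real (pi * real_of_int u))"
  define \<theta> where "\<theta> k = 2 * pi * real k - pi * real_of_int u" for k :: nat
  define \<omega> where "\<omega> k = exp (\<i> * of_real (\<theta> k / real A))" for k :: nat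
  have n\<omega>: "norm (\<omega> k) = 1" for k unfolding \<omega>_def by (rule norm_exp_i_times)
  have \<omega>A: "c0 * \<omega> k ^ A = 1" for k
  proof -
    have "\<omega> k ^ A = exp (of_nat A * (\<i> * of_real (\<theta> k / real A)))"
      unfolding \<omega>_def by (rule exp_of_nat_mult[symmetric])
    also have "of_nat A * (\<i> * of_real (\<theta> k / real A)) = \<i> * of_real (\<theta> k)"
      using A0 by (simp add: field_simps)
    finally have "c0 * \<omega> k ^ A = exp (\<i> * of_real (pi * real_of_int u) + \<i> * of_real (\<theta> k))"
      unfolding c0_def by (simp add: exp_add)
    also have "\<i> * of_real (pi * real_of_int u) + \<i> * of_real (\<theta> k) = 2 * of_nat k * pi * \<i>"
      unfolding \<theta>_def by (simp add: algebra_simps)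
    also have "exp \<dots> = 1" by (rule exp_integer_2pi) simp
    finally show ?thesis .
  qed
  have \<omega>_inj: "j = k" if jk: "j < A" "k < A" "\<omega> j = \<omega> k" for j k
  proof -
    obtain m :: int where m: "\<i> * of_real (\<theta> j / real A) = \<i> * of_real (\<theta> k / real A) + of_int (2 * m) * pi * \<i>"
      using jk(3) unfolding \<omega>_def exp_eq by blast
    have "\<theta> j / real A = \<theta> k / real A + 2 * of_int m * pi"
      using arg_cong[OF m, of Im] by simp
    then have "2 * pi * (real j - real k) = 2 * pi * (of_int m * real A)"
      using A0 unfolding \<theta>_def by (simp add: field_simps)
    then have "real j - real k = of_int m * real A" by simp
    then have "of_int (int j - int k) = (of_int (m * int A) :: real)" by simp
    then have e: "int j - int k = m * int A" by (rule of_int_eq_iff[THEN iffD1])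
    have "m = 0"
    proof (rule ccontr)
      assume "m \<noteq> 0"
      then have "1 \<le> \<bar>m\<bar>" by linarith
      then have "1 * int A \<le> \<bar>m\<bar> * int A" by (rule mult_right_mono) simp
      then have "\<bar>m * int A\<bar> \<ge> int A" by (simp add: abs_mult)
      moreover have "\<bar>int j - int k\<bar> < int A" using jk by linarith
      ultimately show False using e by simp
    qed
    then show ?thesis using e by simp
  qed
  define D where "D = (\<lambda>(j, k). cmod (\<omega> j - \<omega> k)) ` {(j, k). j < A \<and> k < A \<and> j \<noteq> k}"
  have Dfin: "finite D"
  proof -
    have "{(j, k). j < A \<and> k < A \<and> j \<noteq> k} \<subseteq> {..<A} \<times> {..<A}" by auto
    then show ?thesis unfolding D_def by (meson finite_SigmaI finite_imageI finite_lessThan finite_subset)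
  qed
  have "(0::nat, 1::nat) \<in> {(j, k). j < A \<and> k < A \<and> j \<noteq> k}" using A2 by simp
  then have Dne: "D \<noteq> {}" unfolding D_def by blast
  define \<delta> where "\<delta> = Min D"
  have \<delta>pos: "\<delta> > 0"
  proof -
    have "\<delta> \<in> D" unfolding \<delta>_def using Dfin Dne by (rule Min_in)
    then obtain j k where "j < A" "k < A" "j \<noteq> k" "\<delta> = cmod (\<omega> j - \<omega> k)" unfolding D_def by auto
    then show ?thesis using \<omega>_inj by fastforce
  qed
  have \<delta>le: "\<delta> \<le> cmod (\<omega> j - \<omega> k)" if "j < A" "k < A" "j \<noteq> k" for j k
    unfolding \<delta>_def using Dfin by (rule Min_le) (use that in \<open>auto simp: D_def\<close>)
  define c where "c = min (1/8) (\<delta> / 65)"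
  have c0': "c > 0" using \<delta>pos by (simp add: c_def)
  define N where "N = nat \<lceil>(1/c) ^ A\<rceil> + 1"
  show ?thesis
  proof (intro exI[of _ N] allI impI)
    fix n :: nat assume n: "N \<le> n \<and> 1 \<le> n"
    have npos: "real n > 0" using n by simp
    define \<rho> where "\<rho> = 1 / (real n powr (1 / real A))"
    have \<rho>pos: "\<rho> > 0" using npos by (simp add: \<rho>_def)
    have pw: "(real n powr (1 / real A)) ^ M = real n powr (real M / real A)" for M
    proof -
      have "(real n powr (1 / real A)) ^ M = (real n powr (1 / real A)) powr real M"
        using npos by (simp add: powr_realpow)
      also have "\<dots> = real n powr (real M / real A)" by (simp add: powr_powr)
      finally show ?thesis .
    qed
    have \<rho>A: "\<rho> ^ A = 1 / real n"
      unfolding \<rho>_def power_one_over pw using A0 by simp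
    have \<rho>c: "\<rho> < c"
    proof -
      have "real n > (1/c) ^ A" using n unfolding N_def by linarith
      then have "1 / real n < 1 / (1/c) ^ A" using c0' npos by (intro divide_strict_left_mono) (auto intro: mult_pos_pos)
      also have "\<dots> = c ^ A" by (simp add: power_one_over)
      finally have "\<rho> ^ A < c ^ A" using \<rho>A by simp
      then show ?thesis by (rule power_less_imp_less_base) (use c0' in simp)
    qed
    have \<rho>8: "\<rho> \<le> 1/8" using \<rho>c by (simp add: c_def)
    have \<rho>\<delta>: "65 * \<rho> < \<delta>" using \<rho>c by (simp add: c_def)
    define \<epsilon> where "\<epsilon> k = of_real \<rho> * \<omega> k" for k
    have n\<epsilon>: "norm (\<epsilon> k) = \<rho>" for k using \<rho>pos by (simp add: \<epsilon>_def norm_mult n\<omega>)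
    have \<epsilon>4: "norm (\<epsilon> k) < 1/4" for k using \<rho>8 by (simp add: n\<epsilon>)
    define z where "z k = eval_fps (Wser A) (\<epsilon> k)" for k
    have tm: "exp_term a u n k (Suc m) = Wser A $ Suc m * \<epsilon> k ^ Suc m" for k m
    proof -
      have e1: "exp (\<i> * of_real (real (Suc m) * (2 * pi * real k - pi * real_of_int u) / real A)) = \<omega> k ^ Suc m"
      proof -
        have "\<i> * of_real (real (Suc m) * (2 * pi * real k - pi * real_of_int u) / real A)
              = of_nat (Suc m) * (\<i> * of_real (\<theta> k / real A))" unfolding \<theta>_def by simp
        then show ?thesis unfolding \<omega>_def by (simp only: exp_of_nat_mult)
      qed
      have e2: "complex_of_real (real n powr (real (Suc m) / real A)) = of_real (1 / \<rho>) ^ Suc m"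
        unfolding \<rho>_def pw[symmetric] by simp
      have e3: "of_real (pochhammer (2 - real (Suc m) / real A) (Suc m - 1) / fact (Suc m)) = Wser A $ Suc m"
        using Wser_cc[OF A0, of "Suc m"] by (simp add: cc_def)
      show ?thesis unfolding exp_term_def aA e1 e2 e3 \<epsilon>_def using \<rho>pos
        by (simp add: power_mult_distrib field_simps)
    qed
    have sums: "(\<lambda>m. exp_term a u n k (Suc m)) sums z k" for k
      unfolding tm z_def by (rule Wser_sums[OF A0 \<epsilon>4])
    have root: "c0 * of_nat n * z k ^ A = (1 + z k) ^ (A - 1)" for k
    proof -
      have "z k ^ A = \<epsilon> k ^ A * (1 + z k) ^ (A - 1)"
        unfolding z_def by (rule Wser_eval_eq[OF A0 \<epsilon>4])
      moreover have "c0 * of_nat n * \<epsilon> k ^ A = 1"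
      proof -
        have "c0 * of_nat n * \<epsilon> k ^ A = of_nat n * of_real (\<rho> ^ A) * (c0 * \<omega> k ^ A)"
          by (simp add: \<epsilon>_def power_mult_distrib)
        also have "\<dots> = 1" using npos by (simp add: \<rho>A \<omega>A)
        finally show ?thesis .
      qed
      ultimately show ?thesis by (metis mult.assoc mult_1)
    qed
    have close: "norm (z k - \<epsilon> k) \<le> 32 * \<rho> ^ 2" for k
      using Wser_close[OF A0, of "\<epsilon> k"] \<rho>8 by (simp add: n\<epsilon> z_def)
    have zdist: "z j \<noteq> z k" if "j < A" "k < A" "j \<noteq> k" for j k
    proof
      assume eq: "z j = z k"
      have "\<epsilon> j - \<epsilon> k = (z k - \<epsilon> k) - (z j - \<epsilon> j)" using eq by simp
      then have "norm (\<epsilon> j - \<epsilon> k) \<le> norm (z k - \<epsilon> k) + norm (z j - \<epsilon> j)"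
        by (metis norm_triangle_ineq4)
      also have "\<dots> \<le> 64 * \<rho> ^ 2" using close[of j] close[of k] by simp
      finally have 1: "norm (\<epsilon> j - \<epsilon> k) \<le> 64 * \<rho> ^ 2" .
      have "norm (\<epsilon> j - \<epsilon> k) = \<rho> * norm (\<omega> j - \<omega> k)"
        using \<rho>pos by (simp add: \<epsilon>_def right_diff_distrib[symmetric] norm_mult)
      also have "\<dots> \<ge> \<rho> * \<delta>" using \<delta>le[OF that] \<rho>pos by simp
      finally have "\<rho> * \<delta> \<le> 64 * \<rho> ^ 2" using 1 by linarith
      then have "\<delta> \<le> 64 * \<rho>" using \<rho>pos by (simp add: power2_eq_square)
      then show False using \<rho>\<delta> \<rho>pos by linarith
    qed
    have sumeq: "(\<Sum>m. exp_term a u n k (Suc m)) = z k" for k using sums[of k] by (rule sums_unique[symmetric])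
    define cn where "cn = c0 * of_nat n"
    have cn0: "cn \<noteq> 0" using npos by (simp add: cn_def c0_def)
    define P :: "complex poly" where "P = smult cn ([:-1, 1:] ^ A) + - monom 1 (A - 1)"
    have polyP: "poly P \<tau> = p_poly a u n \<tau>" for \<tau>
      unfolding P_def p_poly_def A_def[symmetric] cn_def c0_def by (simp add: poly_monom)
    have d1: "degree (smult cn ([:-1, 1:] ^ A)) = A" using cn0 by (simp add: degree_linear_power)
    have degP: "degree P = A" unfolding P_def
      by (subst degree_add_eq_left) (use d1 A0 in \<open>auto simp: degree_monom_eq\<close>)
    have lc1: "coeff ([:-1, 1:] ^ A) A = (1::complex)"
      using lead_coeff_power[of "[:-1, 1::complex:]" A] by (simp add: degree_linear_power)
    have lcP: "lead_coeff P = cn" unfolding degP unfolding P_def using A0 lc1 by (simp add: coeff_monom)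
    define S where "S = (\<lambda>k. 1 + z k) ` {..<A}"
    have inj: "inj_on (\<lambda>k. 1 + z k) {..<A}" by (auto simp: inj_on_def dest: zdist)
    have cardS: "card S = degree P" unfolding S_def degP by (simp add: card_image[OF inj])
    have rootsS: "\<forall>s\<in>S. poly P s = 0"
      unfolding S_def using root by (auto simp: polyP p_poly_def A_def[symmetric] c0_def)
    have Pfac: "P = smult cn (\<Prod>s\<in>S. [:-s, 1:])"
      using poly_factor_roots[of S P] cardS rootsS lcP unfolding S_def by auto
    show "(\<forall>k < nat a. summable (\<lambda>m. exp_term a u n k (Suc m))) \<and>
           (\<forall>\<tau>. p_poly a u n \<tau> =
                  exp (\<i> * of_real (pi * real_of_int u)) * of_nat n
                  * (\<Prod>k<nat a. \<tau> - (1 + (\<Sum>m. exp_term a u n k (Suc m)))))"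
    proof (intro conjI allI impI)
      fix k assume "k < nat a"
      show "summable (\<lambda>m. exp_term a u n k (Suc m))" using sums[of k] by (rule sums_summable)
    next
      fix \<tau>
      have "p_poly a u n \<tau> = poly P \<tau>" by (simp add: polyP)
      also have "\<dots> = cn * (\<Prod>s\<in>S. \<tau> - s)" by (subst Pfac) (simp add: poly_prod)
      also have "(\<Prod>s\<in>S. \<tau> - s) = (\<Prod>k<A. \<tau> - (1 + z k))"
        unfolding S_def by (rule prod.reindex[OF inj, unfolded comp_def])
      finally show "p_poly a u n \<tau> = exp (\<i> * of_real (pi * real_of_int u)) * of_nat n
                  * (\<Prod>k<nat a. \<tau> - (1 + (\<Sum>m. exp_term a u n k (Suc m))))"
        by (simp add: sumeq cn_def c0_def A_def)
    qed
  qed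
qed



end
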